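(* Let $X$ be a set of propositional variables, $\Sigma\subseteq\Pi X$ a set of classical models, and $\alpha,\beta$ formulas such that $var(\alpha)\cap var(\beta)=\emptyset$, $var(\beta)\cap R(\Sigma)=\emptyset$, and $\beta$ is not a tautology. If $\Sigma\subseteq M(\alpha\vee\beta)$, then $\Sigma\subseteq M(\alpha)$.
   Context: $\Pi X$ is the set of all assignments $X\to\{\mathrm{TRUE},\mathrm{FALSE}\}$; $M(\phi)$ is the set of models of $\phi$; $var(\phi)$ is the set of variables occurring in $\phi$. For $\Sigma\subseteq\Pi X$, a variable $p\in X$ is irrelevant for $\Sigma$ if changing the value of $p$ in any element of $\Sigma$ yields again an element of $\Sigma$ (i.e. $\Sigma=\Sigma\upharpoonright(X-\{p\})\times\{\mathrm{TRUE},\mathrm{FALSE}\}$); $I(\Sigma)$ is the set of irrelevant variables and $R(\Sigma):=X-I(\Sigma)$ the set of relevant (essential) variables. *)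

theory Defs
  imports Main
begin

text \<open>Propositional formulas over a type 'v of variables; the variable set X is UNIV :: 'v set,
and Pi X is the set of all assignments 'v \<Rightarrow> bool.\<close>

datatype 'v form =
    Var 'v
  | Top
  | Bot
  | Neg "'v form"
  | Conj "'v form" "'v form"
  | Disj "'v form" "'v form"
  | Imp "'v form" "'v form"

fun sat :: "('v \<Rightarrow> bool) \<Rightarrow> 'v form \<Rightarrow> bool" where
  "sat s (Var p) = s p"
| "sat s Top = True"
| "sat s Bot = False"
| "sat s (Neg a) = (\<not> sat s a)"
| "sat s (Conj a b) = (sat s a \<and> sat s b)"
| "sat s (Disj a b) = (sat s a \<or> sat s b)"
| "sat s (Imp a b) = (sat s a \<longrightarrow> sat s b)"

definition models :: "'v form \<Rightarrow> ('v \<Rightarrow> bool) set" ("M") where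
  "M a = {s. sat s a}"

fun var :: "'v form \<Rightarrow> 'v set" where
  "var (Var p) = {p}"
| "var Top = {}"
| "var Bot = {}"
| "var (Neg a) = var a"
| "var (Conj a b) = var a \<union> var b"
| "var (Disj a b) = var a \<union> var b"
| "var (Imp a b) = var a \<union> var b"

definition tautology :: "'v form \<Rightarrow> bool" where
  "tautology a \<longleftrightarrow> (\<forall>s. sat s a)"

definition irrelevant :: "('v \<Rightarrow> bool) set \<Rightarrow> 'v \<Rightarrow> bool" where
  "irrelevant \<Sigma> p \<longleftrightarrow> (\<forall>s\<in>\<Sigma>. s(p := \<not> s p) \<in> \<Sigma>)"

definition irr_vars :: "('v \<Rightarrow> bool) set \<Rightarrow> 'v set" ("I") where
  "I \<Sigma> = {p. irrelevant \<Sigma> p}"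

definition rel_vars :: "('v \<Rightarrow> bool) set \<Rightarrow> 'v set" ("R") where
  "R \<Sigma> = UNIV - I \<Sigma>"

end

theory Submission
  imports Defs
begin

lemma sat_cong: "(\<And>p. p \<in> var a \<Longrightarrow> s p = t p) \<Longrightarrow> sat s a = sat t a"
  by (induction a) auto

lemma finite_var: "finite (var a)"
  by (induction a) auto

lemma change_irr:
  assumes "finite V" "\<forall>p\<in>V. irrelevant \<Sigma> p"
  shows "\<forall>s\<in>\<Sigma>. \<forall>t. (\<forall>p. p \<notin> V \<longrightarrow> t p = s p) \<longrightarrow> t \<in> \<Sigma>"
  using assms
proof (induction V rule: finite_induct)
  case empty
  have "\<And>s t. (\<forall>p. t p = s p) \<Longrightarrow> t = s" by auto
  then show ?case by auto
next
  case (insert x F)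
  show ?case
  proof (intro ballI allI impI)
    fix s t assume s: "s \<in> \<Sigma>" and t: "\<forall>p. p \<notin> insert x F \<longrightarrow> t p = s p"
    define s' where "s' = (if s x = t x then s else s(x := \<not> s x))"
    have "s' \<in> \<Sigma>" using s insert.prems unfolding s'_def irrelevant_def by auto
    moreover have "\<forall>p. p \<notin> F \<longrightarrow> t p = s' p" using t insert.hyps unfolding s'_def by auto
    ultimately show "t \<in> \<Sigma>" using insert.IH insert.prems by blast
  qed
qed

theorem fact4p1:
  fixes \<Sigma> :: "('v \<Rightarrow> bool) set" and \<alpha> \<beta> :: "'v form"
  assumes "var \<alpha> \<inter> var \<beta> = {}"
    and "var \<beta> \<inter> R \<Sigma> = {}"
    and "\<not> tautology \<beta>"
    and "\<Sigma> \<subseteq> M (Disj \<alpha> \<beta>)"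
  shows "\<Sigma> \<subseteq> M \<alpha>"
proof
  fix s assume s: "s \<in> \<Sigma>"
  obtain t where t: "\<not> sat t \<beta>" using assms(3) unfolding tautology_def by auto
  define s' where "s' = (\<lambda>p. if p \<in> var \<beta> then t p else s p)"
  have irr: "\<forall>p\<in>var \<beta>. irrelevant \<Sigma> p" using assms(2) unfolding rel_vars_def irr_vars_def by auto
  have "s' \<in> \<Sigma>" using change_irr[OF finite_var irr] s unfolding s'_def by auto
  hence "sat s' \<alpha> \<or> sat s' \<beta>" using assms(4) unfolding models_def by auto
  moreover have "sat s' \<beta> = sat t \<beta>" by (rule sat_cong) (simp add: s'_def)
  moreover have "sat s' \<alpha> = sat s \<alpha>" by (rule sat_cong) (use assms(1) in \<open>auto simp: s'_def\<close>)
  ultimately show "s \<in> M \<alpha>" using t unfolding models_def by auto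
qed

end
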